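(* Let $V:\Omega\to[1,\infty)$ be continuous, let $\varphi$ be an admissible rate function with $\varphi(v)\le v$ for all $v\ge1$, and let $(S_t)_{t\ge0}$ be a Feller-type stochastic semigroup on $\mathcal M_V$ satisfying, for some constants $b,\sigma>0$, the weak generator Lyapunov condition $$\|S_t\mu\|_V\le\|\mu\|_V+\int_0^t\big(b\|S_u\mu\|-\sigma\|S_u\mu\|_{\varphi(V)}\big)\,du\qquad\text{for all }t\ge0\text{ and all nonnegative }\mu\in\mathcal M_V .$$ Then for all $t\ge0$ and all nonnegative $\mu\in\mathcal M_V$, $$\|S_t\mu\|_V+\sigma t\,\|S_t\mu\|_{\varphi(V)}\le\|\mu\|_V+bt\Big(1+\frac{\sigma t}2\Big)\|\mu\| .$$
   Context: $\Omega$ is a locally compact separable metric space with its Borel $\sigma$-algebra. $\mathcal M$ denotes the space of finite signed measures on $\Omega$ and $\mathcal P$ the probability measures. For $\mu\in\mathcal M$ with Hahn–Jordan decomposition $\mu=\mu_+-\mu_-$, $|\mu|=\mu_++\mu_-$ and $\|\mu\|=\int_\Omega d|\mu|$ is the total variation norm. For a measurable $W:\Omega\to[1,\infty)$, $\|\mu\|_W=\int_\Omega W\,d|\mu|$, $\mathcal M_W=\{\mu\in\mathcal M:\|\mu\|_W<\infty\}$. A stochastic operator is a linear map $S:\mathcal M\to\mathcal M$ with $S(\mathcal P)\subseteq\mathcal P$. A stochastic semigroup is a family $(S_t)_{t\ge0}$ of stochastic operators with $S_0=I$ and $S_tS_s=S_{t+s}$; it is a stochastic semigroup on $\mathcal M_W$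 if moreover each $S_t$ maps $\mathcal M_W$ into itself and $\|S_t\mu\|_W\le C_We^{\omega_Wt}\|\mu\|_W$ for some $C_W\ge1,\omega_W\ge0$. A Markov–Feller operator is a bounded linear operator on $C_0(\Omega)$ (continuous functions vanishing at infinity, sup norm) which is positive and satisfies $Pf_n\nearrow1$ pointwise whenever $f_n\nearrow1$ pointwise. A stochastic semigroup is of Feller type if $S_t=P_t^*$ for all $t$, where $(P_t)_{t\ge0}$ is a strongly continuous semigroup of Markov–Feller operators on $C_0(\Omega)$ (using $C_0(\Omega)^*=\mathcal M$). An admissible rate function is a concave function $\varphi:[1,\infty)\to[1,\infty)$ with $\varphi(1)=1$ and $\varphi(v)/v\to0$ as $v\to\infty$; $\varphi(V)$ denotes $\varphi\circ V$. *)

theory Defs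
  imports "HOL-Analysis.Analysis"
begin

text \<open>Finite signed Borel measures on a space of type 'a are represented by their
  values on sets, normalised to 0 on non-Borel sets.\<close>

definition fsm :: "('a::topological_space set \<Rightarrow> real) \<Rightarrow> bool" where
  "fsm \<mu> \<longleftrightarrow>
     (\<exists>M1 M2. sets M1 = sets borel \<and> sets M2 = sets borel \<and>
        finite_measure M1 \<and> finite_measure M2 \<and>
        (\<forall>A\<in>sets borel. \<mu> A = measure M1 A - measure M2 A)) \<and>
     (\<forall>A. A \<notin> sets borel \<longrightarrow> \<mu> A = 0)"

definition prob_sm :: "('a::topological_space set \<Rightarrow> real) \<Rightarrow> bool" where
  "prob_sm \<mu> \<longleftrightarrow> fsm \<mu> \<and> (\<forall>A. \<mu> A \<ge> 0) \<and> \<mu> UNIV = 1"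

definition jpos :: "('a::topological_space set \<Rightarrow> real) \<Rightarrow> 'a measure" where
  "jpos \<mu> = measure_of UNIV (sets borel)
     (\<lambda>A. ennreal (Sup {\<mu> B | B. B \<in> sets borel \<and> B \<subseteq> A}))"

definition jneg :: "('a::topological_space set \<Rightarrow> real) \<Rightarrow> 'a measure" where
  "jneg \<mu> = measure_of UNIV (sets borel)
     (\<lambda>A. ennreal (Sup {- \<mu> B | B. B \<in> sets borel \<and> B \<subseteq> A}))"

text \<open>Weighted norm \<open>\<parallel>\<mu>\<parallel>_W = \<integral> W d|\<mu>|\<close> with \<open>|\<mu>| = \<mu>_+ + \<mu>_-\<close>
  (ennreal-valued; \<open>\<mu> \<in> M_W\<close> iff it is finite). The total variation norm is
  the case \<open>W = 1\<close>.\<close>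
definition wnorm :: "('a::topological_space \<Rightarrow> real) \<Rightarrow> ('a set \<Rightarrow> real) \<Rightarrow> ennreal" where
  "wnorm W \<mu> = (\<integral>\<^sup>+ x. ennreal (W x) \<partial>jpos \<mu>) + (\<integral>\<^sup>+ x. ennreal (W x) \<partial>jneg \<mu>)"

definition sm_integral :: "('a::topological_space set \<Rightarrow> real) \<Rightarrow> ('a \<Rightarrow> real) \<Rightarrow> real" where
  "sm_integral \<mu> f = integral\<^sup>L (jpos \<mu>) f - integral\<^sup>L (jneg \<mu>) f"

definition stochastic_op ::
  "(('a::topological_space set \<Rightarrow> real) \<Rightarrow> ('a set \<Rightarrow> real)) \<Rightarrow> bool" where
  "stochastic_op S \<longleftrightarrow>
     (\<forall>\<mu>. fsm \<mu> \<longrightarrow> fsm (S \<mu>)) \<and>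
     (\<forall>\<mu> \<nu> a b. fsm \<mu> \<longrightarrow> fsm \<nu> \<longrightarrow>
        S (\<lambda>A. a * \<mu> A + b * \<nu> A) = (\<lambda>A. a * S \<mu> A + b * S \<nu> A)) \<and>
     (\<forall>\<mu>. prob_sm \<mu> \<longrightarrow> prob_sm (S \<mu>))"

definition stochastic_semigroup ::
  "(real \<Rightarrow> ('a::topological_space set \<Rightarrow> real) \<Rightarrow> ('a set \<Rightarrow> real)) \<Rightarrow> bool" where
  "stochastic_semigroup S \<longleftrightarrow>
     (\<forall>t\<ge>0. stochastic_op (S t)) \<and>
     (\<forall>\<mu>. fsm \<mu> \<longrightarrow> S 0 \<mu> = \<mu>) \<and>
     (\<forall>t s \<mu>. t \<ge> 0 \<longrightarrow> s \<ge> 0 \<longrightarrow> fsm \<mu> \<longrightarrow> S t (S s \<mu>) = S (t + s) \<mu>)"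

definition stochastic_semigroup_on ::
  "('a::topological_space \<Rightarrow> real) \<Rightarrow> (real \<Rightarrow> ('a set \<Rightarrow> real) \<Rightarrow> ('a set \<Rightarrow> real)) \<Rightarrow> bool" where
  "stochastic_semigroup_on W S \<longleftrightarrow>
     stochastic_semigroup S \<and>
     (\<forall>t\<ge>0. \<forall>\<mu>. fsm \<mu> \<and> wnorm W \<mu> < \<infinity> \<longrightarrow> wnorm W (S t \<mu>) < \<infinity>) \<and>
     (\<exists>C \<omega>. C \<ge> 1 \<and> \<omega> \<ge> 0 \<and>
        (\<forall>t\<ge>0. \<forall>\<mu>. fsm \<mu> \<and> wnorm W \<mu> < \<infinity> \<longrightarrow>
           wnorm W (S t \<mu>) \<le> ennreal (C * exp (\<omega> * t)) * wnorm W \<mu>))"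

definition C0 :: "('a::topological_space \<Rightarrow> real) set" where
  "C0 = {f. continuous_on UNIV f \<and>
            (\<forall>e>0. \<exists>K. compact K \<and> (\<forall>x. x \<notin> K \<longrightarrow> \<bar>f x\<bar> < e))}"

definition supnorm :: "('a \<Rightarrow> real) \<Rightarrow> real" where
  "supnorm f = (SUP x. \<bar>f x\<bar>)"

definition markov_feller :: "(('a::topological_space \<Rightarrow> real) \<Rightarrow> ('a \<Rightarrow> real)) \<Rightarrow> bool" where
  "markov_feller P \<longleftrightarrow>
     (\<forall>f\<in>C0. P f \<in> C0) \<and>
     (\<forall>f\<in>C0. \<forall>g\<in>C0. \<forall>a b. P (\<lambda>x. a * f x + b * g x) = (\<lambda>x. a * P f x + b * P g x)) \<and>
     (\<exists>C. \<forall>f\<in>C0. supnorm (P f) \<le> C * supnorm f) \<and>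
     (\<forall>f\<in>C0. (\<forall>x. f x \<ge> 0) \<longrightarrow> (\<forall>x. P f x \<ge> 0)) \<and>
     (\<forall>F. (\<forall>n. F n \<in> C0) \<longrightarrow>
        (\<forall>x. incseq (\<lambda>n. F n x) \<and> (\<lambda>n. F n x) \<longlonglongrightarrow> 1) \<longrightarrow>
        (\<forall>x. incseq (\<lambda>n. P (F n) x) \<and> (\<lambda>n. P (F n) x) \<longlonglongrightarrow> 1))"

definition feller_semigroup ::
  "(real \<Rightarrow> ('a::topological_space \<Rightarrow> real) \<Rightarrow> ('a \<Rightarrow> real)) \<Rightarrow> bool" where
  "feller_semigroup P \<longleftrightarrow>
     (\<forall>t\<ge>0. markov_feller (P t)) \<and>
     (\<forall>f\<in>C0. P 0 f = f) \<and>
     (\<forall>t s f. t \<ge> 0 \<longrightarrow> s \<ge> 0 \<longrightarrow> f \<in> C0 \<longrightarrow> P (t + s) f = P t (P s f)) \<and>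
     (\<forall>f\<in>C0. \<forall>t\<ge>0.
        ((\<lambda>s. supnorm (\<lambda>x. P s f x - P t f x)) \<longlongrightarrow> 0) (at t within {0..}))"

definition feller_type ::
  "(real \<Rightarrow> ('a::topological_space set \<Rightarrow> real) \<Rightarrow> ('a set \<Rightarrow> real)) \<Rightarrow> bool" where
  "feller_type S \<longleftrightarrow>
     stochastic_semigroup S \<and>
     (\<exists>P. feller_semigroup P \<and>
        (\<forall>t\<ge>0. \<forall>\<mu>. fsm \<mu> \<longrightarrow> (\<forall>f\<in>C0. sm_integral (S t \<mu>) f = sm_integral \<mu> (P t f))))"

definition admissible_rate :: "(real \<Rightarrow> real) \<Rightarrow> bool" where
  "admissible_rate \<phi> \<longleftrightarrow>
     concave_on {1..} \<phi> \<and> (\<forall>v\<ge>1. \<phi> v \<ge> 1) \<and> \<phi> 1 = 1 \<and>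
     ((\<lambda>v. \<phi> v / v) \<longlongrightarrow> 0) at_top"

end

theory Submission
  imports Defs
begin

definition pos :: "('a::topological_space set \<Rightarrow> real) \<Rightarrow> bool" where
  "pos \<nu> \<longleftrightarrow> fsm \<nu> \<and> (\<forall>A. \<nu> A \<ge> 0)"

lemma fsm_repr:
  assumes "fsm \<nu>"
  obtains M1 M2 where "sets M1 = sets borel" "sets M2 = sets borel"
    "finite_measure M1" "finite_measure M2"
    "\<And>A. A \<in> sets borel \<Longrightarrow> \<nu> A = measure M1 A - measure M2 A"
    "\<And>A. A \<notin> sets borel \<Longrightarrow> \<nu> A = 0"
  using assms unfolding fsm_def by blast

lemma fsm_empty: "fsm \<nu> \<Longrightarrow> \<nu> {} = 0"
  by (erule fsm_repr) auto

lemma fsm_add: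
  assumes "fsm \<nu>" "A \<in> sets borel" "B \<in> sets borel" "A \<inter> B = {}"
  shows "\<nu> (A \<union> B) = \<nu> A + \<nu> B"
proof -
  obtain M1 M2 where M: "sets M1 = sets borel" "sets M2 = sets borel"
    "finite_measure M1" "finite_measure M2"
    "\<And>A. A \<in> sets borel \<Longrightarrow> \<nu> A = measure M1 A - measure M2 A"
    using fsm_repr[OF assms(1)] by metis
  have "measure M1 (A \<union> B) = measure M1 A + measure M1 B"
    using finite_measure.finite_measure_Union[OF M(3)] M(1) assms by auto
  moreover have "measure M2 (A \<union> B) = measure M2 A + measure M2 B"
    using finite_measure.finite_measure_Union[OF M(4)] M(2) assms by auto
  ultimately show ?thesis using M(5) assms by auto
qed

lemma fsm_sums:
  assumes "fsm \<nu>" "range A \<subseteq> sets borel" "disjoint_family A"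
  shows "(\<lambda>i. \<nu> (A i)) sums \<nu> (\<Union>i. A i)"
proof -
  obtain M1 M2 where M: "sets M1 = sets borel" "sets M2 = sets borel"
    "finite_measure M1" "finite_measure M2"
    "\<And>A. A \<in> sets borel \<Longrightarrow> \<nu> A = measure M1 A - measure M2 A"
    using fsm_repr[OF assms(1)] by metis
  have 1: "(\<lambda>i. measure M1 (A i)) sums measure M1 (\<Union>i. A i)"
    using finite_measure.finite_measure_UNION[OF M(3)] M(1) assms by auto
  have 2: "(\<lambda>i. measure M2 (A i)) sums measure M2 (\<Union>i. A i)"
    using finite_measure.finite_measure_UNION[OF M(4)] M(2) assms by auto
  have U: "(\<Union>i. A i) \<in> sets borel" using assms(2) by auto
  show ?thesis using sums_diff[OF 1 2] M(5) U assms(2) by (auto simp: range_subsetD)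
qed

lemma pos_mono:
  assumes "pos \<nu>" "A \<in> sets borel" "B \<in> sets borel" "A \<subseteq> B"
  shows "\<nu> A \<le> \<nu> B"
proof -
  have "\<nu> B = \<nu> A + \<nu> (B - A)"
    using fsm_add[of \<nu> A "B - A"] assms unfolding pos_def by (auto simp: Un_absorb1)
  thus ?thesis using assms unfolding pos_def by (metis le_add_same_cancel1)
qed

lemma sigma_borel: "sigma_algebra UNIV (sets (borel::'a::topological_space measure))"
  by (metis sets.sigma_algebra_axioms space_borel)

lemma sigma_sets_borel[simp]: "sigma_sets UNIV (sets (borel::'a::topological_space measure)) = sets borel"
  using sigma_algebra.sigma_sets_eq[OF sigma_borel] .

lemma jpos_sets[simp]: "sets (jpos \<nu>) = sets borel"
  unfolding jpos_def by (simp add: sets_measure_of_conv)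

lemma jpos_space[simp]: "space (jpos \<nu>) = UNIV"
  unfolding jpos_def by simp

lemma jneg_sets[simp]: "sets (jneg \<nu>) = sets borel"
  unfolding jneg_def by (simp add: sets_measure_of_conv)

lemma jneg_space[simp]: "space (jneg \<nu>) = UNIV"
  unfolding jneg_def by simp

lemma jpos_emeasure:
  assumes "pos \<nu>" "A \<in> sets borel"
  shows "emeasure (jpos \<nu>) A = ennreal (\<nu> A)"
proof -
  have sup: "Sup {\<nu> B | B. B \<in> sets borel \<and> B \<subseteq> A} = \<nu> A" if "A \<in> sets borel" for A
    by (rule cSup_eq_maximum) (use that pos_mono[OF assms(1)] in auto)
  let ?f = "\<lambda>A. ennreal (Sup {\<nu> B | B. B \<in> sets borel \<and> B \<subseteq> A})"
  have ca: "countably_additive (sets borel) ?f"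
  proof (rule countably_additiveI)
    fix A :: "nat \<Rightarrow> 'a set" assume A: "range A \<subseteq> sets borel" "disjoint_family A" "(\<Union>i. A i) \<in> sets borel"
    have "(\<lambda>i. \<nu> (A i)) sums \<nu> (\<Union>i. A i)" using fsm_sums assms(1) A unfolding pos_def by blast
    hence "(\<lambda>i. ennreal (\<nu> (A i))) sums ennreal (\<nu> (\<Union>i. A i))"
      using assms(1) unfolding pos_def by (subst sums_ennreal) auto
    hence "(\<Sum>i. ennreal (\<nu> (A i))) = ennreal (\<nu> (\<Union>i. A i))" by (rule sums_unique[symmetric])
    thus "(\<Sum>i. ?f (A i)) = ?f (\<Union>i. A i)" using sup A by (simp add: range_subsetD)
  qed
  have po: "positive (sets borel) ?f"
    unfolding positive_def using sup[of "{}"] fsm_empty assms(1) unfolding pos_def by auto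
  show ?thesis unfolding jpos_def
    by (subst emeasure_measure_of_sigma[OF sigma_borel po ca assms(2)]) (simp add: sup assms(2))
qed

lemma jneg_null:
  assumes "pos \<nu>"
  shows "jneg \<nu> = null_measure borel"
proof -
  have sup: "Sup {- \<nu> B | B. B \<in> sets borel \<and> B \<subseteq> A} = 0" for A
    by (rule cSup_eq_maximum) (use assms fsm_empty[of \<nu>] in \<open>auto simp: pos_def intro!: exI[of _ "{}"]\<close>)
  have ca: "countably_additive (sets borel) (\<lambda>A. ennreal 0 :: ennreal)"
    by (rule countably_additiveI) simp
  have po: "positive (sets borel) (\<lambda>A. ennreal 0 :: ennreal)" unfolding positive_def by simp
  have j: "jneg \<nu> = measure_of UNIV (sets borel) (\<lambda>A. ennreal 0)"
    unfolding jneg_def sup ..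
  have e: "emeasure (measure_of UNIV (sets borel) (\<lambda>A. ennreal 0)) A = ennreal 0"
    if "A \<in> sets borel" for A :: "'a set"
    by (rule emeasure_measure_of_sigma[OF sigma_borel po ca that])
  show ?thesis
    by (rule measure_eqI) (simp_all add: j[symmetric] e[unfolded j[symmetric]])
qed

lemma wnorm_pos:
  assumes "pos \<nu>"
  shows "wnorm W \<nu> = (\<integral>\<^sup>+ x. ennreal (W x) \<partial>jpos \<nu>)"
  unfolding wnorm_def jneg_null[OF assms] by simp

lemma jpos_finite:
  assumes "pos \<nu>" shows "finite_measure (jpos \<nu>)"
  by (rule finite_measureI) (simp add: jpos_emeasure[OF assms])

lemma jpos_measure:
  assumes "pos \<nu>" "A \<in> sets borel" shows "measure (jpos \<nu>) A = \<nu> A"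
  using jpos_emeasure[OF assms] assms(1) unfolding measure_def pos_def by simp

lemma fsm_of_measure:
  assumes "finite_measure N" "sets N = sets borel"
  shows "fsm (\<lambda>A. if A \<in> sets borel then measure N A else 0)"
  unfolding fsm_def
proof (intro conjI allI impI)
  have "finite_measure (null_measure borel)" by (rule finite_measureI) simp
  thus "\<exists>M1 M2. sets M1 = sets borel \<and> sets M2 = sets borel \<and> finite_measure M1 \<and> finite_measure M2 \<and>
     (\<forall>A\<in>sets borel. (if A \<in> sets borel then measure N A else 0) = measure M1 A - measure M2 A)"
    using assms by (intro exI[of _ N] exI[of _ "null_measure borel"]) (auto simp: measure_def)
qed simp

lemma pos_of_measure:
  assumes "finite_measure N" "sets N = sets borel"
    and "\<nu> = (\<lambda>A. if A \<in> sets borel then measure N A else 0)"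
  shows "pos \<nu>" "jpos \<nu> = N"
proof -
  show p: "pos \<nu>" unfolding pos_def using fsm_of_measure[OF assms(1,2)] assms(3) by simp
  show "jpos \<nu> = N"
    by (rule measure_eqI) (use assms jpos_emeasure[OF p] in \<open>simp_all add: finite_measure.emeasure_eq_measure\<close>)
qed

lemma fsm_nonborel: "fsm \<nu> \<Longrightarrow> A \<notin> sets borel \<Longrightarrow> \<nu> A = 0"
  unfolding fsm_def by blast

lemma pos_eq_measure:
  assumes "pos \<nu>"
  shows "\<nu> = (\<lambda>A. if A \<in> sets borel then measure (jpos \<nu>) A else 0)"
  using assms jpos_measure[OF assms] fsm_nonborel[of \<nu>] unfolding pos_def by (auto intro!: ext)

definition res :: "('a::topological_space set \<Rightarrow> real) \<Rightarrow> 'a set \<Rightarrow> 'a set \<Rightarrow> real" where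
  "res \<nu> B = (\<lambda>A. if A \<in> sets borel then \<nu> (A \<inter> B) else 0)"

lemma res_density:
  assumes "pos \<nu>" "B \<in> sets borel"
  shows "res \<nu> B = (\<lambda>A. if A \<in> sets borel then measure (density (jpos \<nu>) (indicator B)) A else 0)"
proof -
  interpret finite_measure "jpos \<nu>" by (rule jpos_finite[OF assms(1)])
  have "measure (density (jpos \<nu>) (indicator B)) A = \<nu> (A \<inter> B)" if "A \<in> sets borel" for A
    using that assms emeasure_restricted[of B "jpos \<nu>" A]
    by (simp add: measure_def Int_commute jpos_emeasure[OF assms(1)] pos_def)
  thus ?thesis unfolding res_def by auto
qed

lemma res_pos:
  assumes "pos \<nu>" "B \<in> sets borel"
  shows "pos (res \<nu> B)" "jpos (res \<nu> B) = density (jpos \<nu>) (indicator B)"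
proof -
  interpret finite_measure "jpos \<nu>" by (rule jpos_finite[OF assms(1)])
  have fm: "finite_measure (density (jpos \<nu>) (indicator B))"
    by (rule finite_measureI) (simp add: emeasure_restricted assms)
  show "pos (res \<nu> B)" "jpos (res \<nu> B) = density (jpos \<nu>) (indicator B)"
    using pos_of_measure[OF fm _ res_density[OF assms]] by auto
qed

lemma meas_jpos: "f \<in> borel_measurable borel \<Longrightarrow> f \<in> borel_measurable (jpos \<nu>)"
  by (subst measurable_cong_sets[OF jpos_sets refl])

lemma wnorm_res:
  assumes "pos \<nu>" "B \<in> sets borel" "W \<in> borel_measurable borel"
  shows "wnorm W (res \<nu> B) = (\<integral>\<^sup>+ x. indicator B x * ennreal (W x) \<partial>jpos \<nu>)"
proof -
  have m1: "(\<lambda>x. ennreal (W x)) \<in> borel_measurable (jpos \<nu>)"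
    using meas_jpos[OF assms(3)] by measurable
  have m2: "indicator B \<in> borel_measurable (jpos \<nu>)"
    by (rule borel_measurable_indicator) (simp add: assms(2))
  show ?thesis
    unfolding wnorm_pos[OF res_pos(1)[OF assms(1,2)]] res_pos(2)[OF assms(1,2)]
    by (rule nn_integral_density[OF m2 m1])
qed

lemma scale_pos:
  assumes "pos \<nu>" "c \<ge> 0"
  shows "pos (\<lambda>A. c * \<nu> A)"
proof -
  have e: "emeasure (scale_measure c (jpos \<nu>)) (space (scale_measure c (jpos \<nu>))) = ennreal c * ennreal (\<nu> UNIV)"
    by (simp add: space_scale_measure jpos_emeasure[OF assms(1)])
  have fm: "finite_measure (scale_measure c (jpos \<nu>))"
  proof (rule finite_measureI)
    have "ennreal c * ennreal (\<nu> UNIV) = ennreal (c * \<nu> UNIV)" by (rule ennreal_mult'[OF assms(2), symmetric])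
    thus "emeasure (scale_measure c (jpos \<nu>)) (space (scale_measure c (jpos \<nu>))) \<noteq> \<infinity>"
      unfolding e by simp
  qed
  have eq: "c * \<nu> A = (if A \<in> sets borel then measure (scale_measure c (jpos \<nu>)) A else 0)" for A
  proof (cases "A \<in> sets borel")
    case True thus ?thesis using jpos_measure[OF assms(1) True] measure_scale_measure[OF assms(2), of "jpos \<nu>" A] by simp
  next
    case False thus ?thesis using fsm_nonborel[of \<nu> A] assms(1) unfolding pos_def by simp
  qed
  have s: "sets (scale_measure c (jpos \<nu>)) = sets borel" by simp
  show ?thesis using pos_of_measure(1)[OF fm s] eq by presburger
qed

lemma mass_wnorm:
  assumes "pos \<nu>" shows "wnorm (\<lambda>_. 1) \<nu> = ennreal (\<nu> UNIV)"
  using assms by (simp add: wnorm_pos jpos_emeasure)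

lemma pos_zero: "pos (\<lambda>A. 0)"
proof -
  have fm: "finite_measure (null_measure borel :: 'a measure)" by (rule finite_measureI) simp
  have "(\<lambda>A. 0::real) = (\<lambda>A::'a set. if A \<in> sets borel then measure (null_measure borel) A else 0)"
    by (rule ext) (simp add: measure_def)
  thus ?thesis using pos_of_measure(1)[OF fm] by simp
qed

lemma wnorm_zero: "wnorm W (\<lambda>A. 0) = 0"
proof -
  have "jpos (\<lambda>A. 0::real) = (null_measure borel :: 'a measure)"
    by (rule measure_eqI) (simp_all add: jpos_emeasure[OF pos_zero])
  thus ?thesis by (simp add: wnorm_pos[OF pos_zero])
qed


lemma nn_integral_sum_meas:
  assumes sQ: "sets Q = sets M" and sN: "sets N = sets M"
    and e: "\<And>X. X \<in> sets M \<Longrightarrow> emeasure Q X = emeasure M X + emeasure N X"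
    and f: "f \<in> borel_measurable M"
  shows "integral\<^sup>N Q f = integral\<^sup>N M f + integral\<^sup>N N f"
proof -
  have spQ: "space Q = space M" and spN: "space N = space M"
    using sQ sN sets_eq_imp_space_eq by blast+
  obtain g where g: "\<And>i. simple_function M (g i)" "incseq g" "\<And>i x. g i x < top" "\<And>x. (SUP i. g i x) = f x"
    using borel_measurable_implies_simple_function_sequence'[OF f] by metis
  have simQ: "simple_function Q (g i)" and simN: "simple_function N (g i)" for i
    using g(1)[of i] unfolding simple_function_def spQ spN sQ sN by simp_all
  have gm: "g i \<in> borel_measurable M" for i using g(1) by (rule borel_measurable_simple_function)
  have si: "integral\<^sup>N Q (g i) = integral\<^sup>N M (g i) + integral\<^sup>N N (g i)" for i
  proof -
    have "integral\<^sup>S Q (g i) = (\<Sum>x\<in>g i ` space M. x * (emeasure M (g i -` {x} \<inter> space M) + emeasure N (g i -` {x} \<inter> space M)))"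
      unfolding simple_integral_def spQ
      by (rule sum.cong[OF refl]) (simp add: e simple_functionD(2)[OF g(1)[of i]])
    also have "\<dots> = integral\<^sup>S M (g i) + integral\<^sup>S N (g i)"
      unfolding simple_integral_def spN by (simp only: distrib_left sum.distrib)
    finally show ?thesis
      by (simp only: nn_integral_eq_simple_integral g(1) simQ simN)
  qed
  have f_eq: "f = (\<lambda>x. SUP i. g i x)" using g(4) by auto
  have mQ: "g i \<in> borel_measurable Q" and mN: "g i \<in> borel_measurable N" for i
    using gm by (simp_all add: measurable_cong_sets[OF sQ refl] measurable_cong_sets[OF sN refl])
  have "integral\<^sup>N Q f = (SUP i. integral\<^sup>N Q (g i))"
    unfolding f_eq by (rule nn_integral_monotone_convergence_SUP[OF g(2) mQ])
  also have "\<dots> = (SUP i. integral\<^sup>N M (g i) + integral\<^sup>N N (g i))" by (simp add: si)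
  also have "\<dots> = (SUP i. integral\<^sup>N M (g i)) + (SUP i. integral\<^sup>N N (g i))"
    by (rule ennreal_SUP_add) (use g(2) in \<open>auto intro!: nn_integral_mono simp: incseq_def le_fun_def\<close>)
  also have "\<dots> = integral\<^sup>N M f + integral\<^sup>N N f"
    unfolding f_eq
    by (simp add: nn_integral_monotone_convergence_SUP[OF g(2) gm]
        nn_integral_monotone_convergence_SUP[OF g(2) mN])
  finally show ?thesis .
qed

lemma wnorm_add:
  assumes "pos \<alpha>" "pos \<beta>" "pos \<gamma>" "\<And>A. \<gamma> A = \<alpha> A + \<beta> A"
    and "W \<in> borel_measurable borel"
  shows "wnorm W \<gamma> = wnorm W \<alpha> + wnorm W \<beta>"
  unfolding wnorm_pos[OF assms(1)] wnorm_pos[OF assms(2)] wnorm_pos[OF assms(3)]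
proof (rule nn_integral_sum_meas)
  show "sets (jpos \<gamma>) = sets (jpos \<alpha>)" "sets (jpos \<beta>) = sets (jpos \<alpha>)" by simp_all
  show "emeasure (jpos \<gamma>) X = emeasure (jpos \<alpha>) X + emeasure (jpos \<beta>) X" if "X \<in> sets (jpos \<alpha>)" for X
    using that assms by (simp add: jpos_emeasure pos_def ennreal_plus)
  show "(\<lambda>x. ennreal (W x)) \<in> borel_measurable (jpos \<alpha>)"
    using meas_jpos[OF assms(5)] by measurable
qed

lemma adm_convex: "admissible_rate \<phi> \<Longrightarrow> convex_on {1..} (\<lambda>x. - \<phi> x)"
  unfolding admissible_rate_def concave_on_def by blast

lemma phi_mono:
  assumes a: "admissible_rate \<phi>" and xy: "1 \<le> x" "x \<le> y"
  shows "\<phi> x \<le> \<phi> y"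
proof (rule ccontr)
  assume "\<not> \<phi> x \<le> \<phi> y"
  hence d: "\<phi> y < \<phi> x" by simp
  hence xy': "x < y" using xy by (cases "x = y") auto
  define d where "d = \<phi> x - \<phi> y"
  have dpos: "d > 0" using d d_def by simp
  have py: "\<phi> y \<ge> 1" using a xy unfolding admissible_rate_def by simp
  define z where "z = y + (y - x) * \<phi> y / d"
  have yz: "y < z" unfolding z_def using dpos xy' py by (simp add: field_simps)
  have "((- \<phi> x) - (- \<phi> y)) / (x - y) \<le> ((- \<phi> x) - (- \<phi> z)) / (x - z)"
    using convex_on_slope_le(1)[OF adm_convex[OF a], of x z y] xy xy' yz by simp
  moreover have "((- \<phi> x) - (- \<phi> z)) / (x - z) \<le> ((- \<phi> y) - (- \<phi> z)) / (y - z)"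
    using convex_on_slope_le(2)[OF adm_convex[OF a], of x z y] xy xy' yz by simp
  ultimately have "d / (y - x) \<le> (\<phi> y - \<phi> z) / (z - y)"
    unfolding d_def using xy' yz by (simp add: field_simps)
  hence "d * (z - y) \<le> (\<phi> y - \<phi> z) * (y - x)"
    using xy' yz by (simp add: field_simps)
  moreover have "d * (z - y) = (y - x) * \<phi> y" unfolding z_def using dpos by (simp add: field_simps)
  ultimately have "(y - x) * \<phi> z \<le> 0" by (simp add: algebra_simps)
  moreover have "\<phi> z \<ge> 1" using a xy yz unfolding admissible_rate_def by simp
  ultimately show False using xy' by (simp add: mult_le_0_iff)
qed

lemma phi_lip:
  assumes a: "admissible_rate \<phi>" and le: "\<forall>v\<ge>1. \<phi> v \<le> v" and xy: "1 \<le> x" "x \<le> y"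
  shows "\<phi> y \<le> \<phi> x + (y - x)"
proof (cases "x = 1")
  case True thus ?thesis using a le xy unfolding admissible_rate_def by simp
next
  case False
  hence x1: "1 < x" using xy by simp
  show ?thesis
  proof (cases "x = y")
    case True thus ?thesis by simp
  next
    case False
    hence xy': "x < y" using xy by simp
    have "((- \<phi> 1) - (- \<phi> x)) / (1 - x) \<le> ((- \<phi> 1) - (- \<phi> y)) / (1 - y)"
      using convex_on_slope_le(1)[OF adm_convex[OF a], of 1 y x] x1 xy' by simp
    moreover have "((- \<phi> 1) - (- \<phi> y)) / (1 - y) \<le> ((- \<phi> x) - (- \<phi> y)) / (x - y)"
      using convex_on_slope_le(2)[OF adm_convex[OF a], of 1 y x] x1 xy' by simp
    ultimately have s: "(\<phi> y - \<phi> x) / (y - x) \<le> (\<phi> x - \<phi> 1) / (x - 1)"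
      using x1 xy' by (simp add: field_simps)
    have "(\<phi> x - \<phi> 1) / (x - 1) \<le> 1"
      using le x1 a unfolding admissible_rate_def by simp
    with s have "(\<phi> y - \<phi> x) / (y - x) \<le> 1" by linarith
    thus ?thesis using xy' by (simp add: field_simps)
  qed
qed

lemma phi_support:
  assumes a: "admissible_rate \<phi>" and x: "1 < x"
  shows "\<exists>k\<ge>0. \<forall>y\<ge>1. \<phi> y \<le> \<phi> x + k * (y - x)"
proof -
  define F where "F = Inf ((\<lambda>t. ((- \<phi> x) - (- \<phi> t)) / (x - t)) ` ({x<..} \<inter> {1..}))"
  have xi: "x \<in> interior {1..}" using x by simp
  have ineq: "- \<phi> y \<ge> - \<phi> x + F * (y - x)" if "y \<ge> 1" for y
    using convex_le_Inf_differential[OF adm_convex[OF a] xi, of y] that unfolding F_def by simp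
  have "- \<phi> (x + 1) \<ge> - \<phi> x + F" using ineq[of "x + 1"] x by simp
  moreover have "\<phi> x \<le> \<phi> (x + 1)" using phi_mono[OF a, of x "x + 1"] x by simp
  ultimately have "F \<le> 0" by simp
  thus ?thesis using ineq by (intro exI[of _ "- F"]) (auto simp: algebra_simps)
qed

lemma S_lin:
  assumes "stochastic_semigroup S" "t \<ge> 0" "fsm \<mu>" "fsm \<nu>"
  shows "S t (\<lambda>A. \<mu> A + \<nu> A) = (\<lambda>A. S t \<mu> A + S t \<nu> A)"
proof -
  have "stochastic_op (S t)" using assms unfolding stochastic_semigroup_def by blast
  hence "S t (\<lambda>A. 1 * \<mu> A + 1 * \<nu> A) = (\<lambda>A. 1 * S t \<mu> A + 1 * S t \<nu> A)"
    using assms unfolding stochastic_op_def by blast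
  thus ?thesis by simp
qed

lemma S_fsm:
  assumes "stochastic_semigroup S" "t \<ge> 0" "fsm \<mu>"
  shows "fsm (S t \<mu>)"
  using assms unfolding stochastic_semigroup_def stochastic_op_def by blast

lemma S_zero:
  assumes "stochastic_semigroup S" "t \<ge> 0"
  shows "S t (\<lambda>A. 0) = (\<lambda>A. 0)"
proof -
  have "stochastic_op (S t)" using assms unfolding stochastic_semigroup_def by blast
  moreover have f: "fsm (\<lambda>A::'a set. 0::real)" using pos_zero unfolding pos_def by blast
  ultimately have "S t (\<lambda>A. 0 * (0::real) + 0 * 0) = (\<lambda>A. 0 * S t (\<lambda>A. 0) A + 0 * S t (\<lambda>A. 0) A)"
    unfolding stochastic_op_def by blast
  thus ?thesis by simp
qed

lemma pos_zero_mass: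
  assumes "pos \<nu>" "\<nu> UNIV = 0"
  shows "\<nu> = (\<lambda>A. 0)"
proof
  fix A
  show "\<nu> A = 0"
  proof (cases "A \<in> sets borel")
    case True
    thus ?thesis using pos_mono[OF assms(1) True, of UNIV] assms unfolding pos_def
      by (metis order_antisym sets.top space_borel subset_UNIV)
  next
    case False thus ?thesis using assms(1) fsm_nonborel unfolding pos_def by blast
  qed
qed

lemma S_pos:
  assumes S: "stochastic_semigroup S" and t: "t \<ge> 0" and p: "pos \<nu>"
  shows "pos (S t \<nu>)" "S t \<nu> UNIV = \<nu> UNIV"
proof -
  have op: "stochastic_op (S t)" using assms unfolding stochastic_semigroup_def by blast
  have "pos (S t \<nu>) \<and> S t \<nu> UNIV = \<nu> UNIV"
  proof (cases "\<nu> UNIV = 0")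
    case True
    hence "\<nu> = (\<lambda>A. 0)" using pos_zero_mass p by blast
    thus ?thesis using S_zero[OF S t] pos_zero True by simp
  next
    case False
    define m where "m = \<nu> UNIV"
    have m: "m > 0" using False p unfolding m_def pos_def by (simp add: order_less_le)
    define \<pi> where "\<pi> = (\<lambda>A. (1/m) * \<nu> A)"
    have pp: "pos \<pi>" unfolding \<pi>_def by (rule scale_pos[OF p]) (use m in simp)
    hence "prob_sm \<pi>" using m unfolding prob_sm_def pos_def \<pi>_def m_def by simp
    hence pr: "prob_sm (S t \<pi>)" using op unfolding stochastic_op_def by blast
    have fn: "fsm \<nu>" using p unfolding pos_def by blast
    have "S t (\<lambda>A. (1/m) * \<nu> A + 0 * \<nu> A) = (\<lambda>A. (1/m) * S t \<nu> A + 0 * S t \<nu> A)"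
      using op fn unfolding stochastic_op_def by blast
    hence eq: "S t \<pi> = (\<lambda>A. (1/m) * S t \<nu> A)" unfolding \<pi>_def by simp
    have "S t \<nu> A = m * S t \<pi> A" for A using m eq by simp
    moreover have "fsm (S t \<nu>)" using S_fsm[OF S t fn] .
    ultimately show ?thesis using pr m unfolding prob_sm_def pos_def m_def
      by (simp add: zero_le_mult_iff)
  qed
  thus "pos (S t \<nu>)" "S t \<nu> UNIV = \<nu> UNIV" by blast+
qed

lemma res_UNIV: "fsm \<nu> \<Longrightarrow> res \<nu> UNIV = \<nu>"
  unfolding res_def using fsm_nonborel by fastforce

lemma res_split:
  assumes "fsm \<nu>" "B \<in> sets borel" "C \<in> sets borel" "B \<inter> C = {}"
  shows "res \<nu> (B \<union> C) A = res \<nu> B A + res \<nu> C A"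
proof (cases "A \<in> sets borel")
  case True
  have "A \<inter> (B \<union> C) = (A \<inter> B) \<union> (A \<inter> C)" by blast
  thus ?thesis unfolding res_def using True assms fsm_add[OF assms(1), of "A \<inter> B" "A \<inter> C"] by auto
qed (simp add: res_def)

locale setting =
  fixes V :: "'a::metric_space \<Rightarrow> real" and \<phi> :: "real \<Rightarrow> real"
    and S :: "real \<Rightarrow> ('a set \<Rightarrow> real) \<Rightarrow> ('a set \<Rightarrow> real)" and b \<sigma> :: real
  assumes Vc: "continuous_on UNIV V" and V1: "\<forall>x. V x \<ge> 1"
    and adm: "admissible_rate \<phi>" and phile: "\<forall>v\<ge>1. \<phi> v \<le> v"
    and Son: "stochastic_semigroup_on V S"
    and bpos: "b > 0" and spos: "\<sigma> > 0"
    and lyap: "\<forall>t\<ge>0. \<forall>\<mu>. fsm \<mu> \<and> (\<forall>A. \<mu> A \<ge> 0) \<and> wnorm V \<mu> < \<infinity> \<longrightarrow>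
       enn2real (wnorm V (S t \<mu>)) \<le> enn2real (wnorm V \<mu>) +
         (LINT u:{0..t}|lborel. b * enn2real (wnorm (\<lambda>_. 1) (S u \<mu>))
                                - \<sigma> * enn2real (wnorm (\<lambda>x. \<phi> (V x)) (S u \<mu>)))"
begin

lemma SS: "stochastic_semigroup S" using Son unfolding stochastic_semigroup_on_def by blast

lemma Vm: "V \<in> borel_measurable borel" using Vc by (rule borel_measurable_continuous_onI)

lemma Phim: "(\<lambda>x. \<phi> (V x)) \<in> borel_measurable borel"
proof -
  have "mono (\<lambda>v. \<phi> (max 1 v))"
    by (rule monoI) (auto intro!: phi_mono[OF adm])
  hence m: "(\<lambda>v. \<phi> (max 1 v)) \<in> borel_measurable borel" by (rule borel_measurable_mono)
  have "(\<lambda>x. \<phi> (max 1 (V x))) \<in> borel_measurable borel"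
    using measurable_compose[OF Vm m] by (simp add: o_def)
  moreover have "(\<lambda>x. \<phi> (max 1 (V x))) = (\<lambda>x. \<phi> (V x))" using V1 by (auto simp: max_def)
  ultimately show ?thesis by simp
qed

lemma wfin: "pos \<nu> \<Longrightarrow> wnorm V \<nu> < \<infinity> \<Longrightarrow> s \<ge> 0 \<Longrightarrow> wnorm V (S s \<nu>) < \<infinity>"
  using Son unfolding stochastic_semigroup_on_def pos_def by blast

lemma wnorm_mono: "(\<And>x. W1 x \<le> W2 x) \<Longrightarrow> wnorm W1 \<nu> \<le> wnorm W2 \<nu>"
  unfolding wnorm_def by (intro add_mono nn_integral_mono) (simp_all add: ennreal_leI)

lemma Phi_le_V: "wnorm (\<lambda>x. \<phi> (V x)) \<nu> \<le> wnorm V \<nu>"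
  by (rule wnorm_mono) (use phile V1 in auto)

lemma V_ge_mass: "wnorm (\<lambda>_. 1) \<nu> \<le> wnorm V \<nu>"
  by (rule wnorm_mono) (use V1 in auto)

lemma ly_bound:
  assumes s: "s \<ge> 0" and p: "pos \<nu>" and f: "wnorm V \<nu> < \<infinity>"
  shows "enn2real (wnorm V (S s \<nu>)) \<le> enn2real (wnorm V \<nu>) + b * s * \<nu> UNIV"
proof -
  define m where "m = \<nu> UNIV"
  have m0: "m \<ge> 0" using p unfolding m_def pos_def by simp
  define f where "f = (\<lambda>u. b * enn2real (wnorm (\<lambda>_. 1) (S u \<nu>))
                                - \<sigma> * enn2real (wnorm (\<lambda>x. \<phi> (V x)) (S u \<nu>)))"
  have L: "enn2real (wnorm V (S s \<nu>)) \<le> enn2real (wnorm V \<nu>) + (LINT u:{0..s}|lborel. f u)"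
    using lyap s p f unfolding f_def pos_def by blast
  have fle: "f u \<le> b * m" if "u \<in> {0..s}" for u
  proof -
    have "wnorm (\<lambda>_. 1) (S u \<nu>) = ennreal m"
      using mass_wnorm[OF S_pos(1)[OF SS _ p]] S_pos(2)[OF SS _ p] that unfolding m_def by simp
    thus ?thesis unfolding f_def using m0 spos by simp
  qed
  have I: "(LINT u:{0..s}|lborel. f u) \<le> b * m * s"
  proof (cases "set_integrable lborel {0..s} f")
    case True
    have ci: "set_integrable lborel {0..s} (\<lambda>u. b * m)"
      unfolding set_integrable_def by (rule borel_integrable_compact) auto
    have "(LINT u:{0..s}|lborel. f u) \<le> (LINT u:{0..s}|lborel. b * m)"
      by (rule set_integral_mono[OF True ci fle])
    also have "\<dots> = b * m * s"
    proof -
      have "(\<integral>x. (b * m) * indicator {0..s} x \<partial>lborel) = (\<lambda>x. b * m * x) s - (\<lambda>x. b * m * x) 0"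
        by (rule integral_FTC_Icc_real) (use s in \<open>auto intro!: derivative_eq_intros\<close>)
      thus ?thesis unfolding set_lebesgue_integral_def by (simp add: mult.commute)
    qed
    finally show ?thesis .
  next
    case False
    hence "(LINT u:{0..s}|lborel. f u) = 0"
      unfolding set_lebesgue_integral_def set_integrable_def by (rule not_integrable_integral_eq)
    thus ?thesis using bpos m0 s by simp
  qed
  show ?thesis using L I unfolding m_def by (simp add: algebra_simps)
qed

lemma piece:
  assumes s: "s \<ge> 0" and p: "pos \<nu>" and a: "1 < a"
    and bnd: "wnorm V \<nu> \<le> ennreal (a * \<nu> UNIV)"
  shows "wnorm (\<lambda>x. \<phi> (V x)) (S s \<nu>) \<le> ennreal (\<phi> (a + b * s) * \<nu> UNIV)"
proof -
  define m where "m = \<nu> UNIV"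
  have m0: "m \<ge> 0" using p unfolding m_def pos_def by simp
  define \<rho> where "\<rho> = S s \<nu>"
  have pr: "pos \<rho>" and mr: "\<rho> UNIV = m" unfolding \<rho>_def m_def using S_pos[OF SS s p] by auto
  have fin: "wnorm V \<nu> < \<infinity>" using bnd by (metis ennreal_less_top infinity_ennreal_def le_less_trans)
  hence finr: "wnorm V \<rho> < \<infinity>" unfolding \<rho>_def using wfin[OF p _ s] by simp
  define x1 where "x1 = a + b * s"
  have x1: "1 < x1" 
  proof -
    have "b * s \<ge> 0" using bpos s by simp
    thus ?thesis unfolding x1_def using a by linarith
  qed
  have "enn2real (wnorm V \<nu>) \<le> a * m" using enn2real_mono[OF bnd] m0 a unfolding m_def by simp
  hence "enn2real (wnorm V \<rho>) \<le> x1 * m"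
    using ly_bound[OF s p fin] unfolding \<rho>_def x1_def m_def by (simp add: algebra_simps)
  hence "ennreal (enn2real (wnorm V \<rho>)) \<le> ennreal (x1 * m)" by (rule ennreal_leI)
  hence Vr: "wnorm V \<rho> \<le> ennreal (x1 * m)" using finr by simp
  obtain k where k: "k \<ge> 0" "\<And>y. y \<ge> 1 \<Longrightarrow> \<phi> y \<le> \<phi> x1 + k * (y - x1)"
    using phi_support[OF adm x1] by blast
  have p1: "\<phi> x1 \<ge> 1" using adm x1 unfolding admissible_rate_def by simp
  have pt: "ennreal (\<phi> (V x)) + ennreal (k * x1) \<le> ennreal (\<phi> x1) + ennreal k * ennreal (V x)" for x
  proof -
    have h1: "\<phi> (V x) + k * x1 \<le> \<phi> x1 + k * V x" using k(2)[of "V x"] V1 by (simp add: algebra_simps)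
    have h2: "\<phi> (V x) \<ge> 1" using adm V1 unfolding admissible_rate_def by simp
    have kx: "k * x1 \<ge> 0" using k(1) x1 by simp
    have kv: "k * V x \<ge> 0" using k(1) V1 by (simp add: less_imp_le order_trans[OF zero_le_one])
    have e1: "ennreal (\<phi> (V x) + k * x1) = ennreal (\<phi> (V x)) + ennreal (k * x1)"
      by (rule ennreal_plus) (use h2 kx in auto)
    have e2: "ennreal (\<phi> x1 + k * V x) = ennreal (\<phi> x1) + ennreal (k * V x)"
      by (rule ennreal_plus) (use p1 kv in auto)
    have e3: "ennreal (k * V x) = ennreal k * ennreal (V x)" by (rule ennreal_mult'[OF k(1)])
    show ?thesis using ennreal_leI[OF h1] unfolding e1 e2 e3 .
  qed
  define N where "N = jpos \<rho>"
  have spN: "space N = UNIV" unfolding N_def by simp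
  have eN: "emeasure N UNIV = ennreal m" unfolding N_def using jpos_emeasure[OF pr] mr by simp
  have mPhi: "(\<lambda>x. ennreal (\<phi> (V x))) \<in> borel_measurable N"
    unfolding N_def using meas_jpos[OF Phim] by measurable
  have mV: "(\<lambda>x. ennreal (V x)) \<in> borel_measurable N"
    unfolding N_def using meas_jpos[OF Vm] by measurable
  have "wnorm (\<lambda>x. \<phi> (V x)) \<rho> + ennreal (k * x1) * ennreal m
      = (\<integral>\<^sup>+ x. ennreal (\<phi> (V x)) + ennreal (k * x1) \<partial>N)"
    unfolding wnorm_pos[OF pr] N_def[symmetric] using mPhi by (simp add: nn_integral_add spN eN)
  also have "\<dots> \<le> (\<integral>\<^sup>+ x. ennreal (\<phi> x1) + ennreal k * ennreal (V x) \<partial>N)"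
    by (rule nn_integral_mono) (rule pt)
  also have "\<dots> = ennreal (\<phi> x1) * ennreal m + ennreal k * wnorm V \<rho>"
    unfolding wnorm_pos[OF pr] N_def[symmetric] using mV by (simp add: nn_integral_add nn_integral_cmult spN eN)
  also have "\<dots> \<le> ennreal (\<phi> x1) * ennreal m + ennreal k * ennreal (x1 * m)"
    by (intro add_left_mono mult_left_mono Vr) simp
  finally have F: "wnorm (\<lambda>x. \<phi> (V x)) \<rho> + ennreal (k * x1) * ennreal m \<le> ennreal (\<phi> x1) * ennreal m + ennreal k * ennreal (x1 * m)" .
  have q1: "ennreal (k * x1) * ennreal m = ennreal (k * x1 * m)" using k(1) x1 m0 by (simp add: ennreal_mult')
  have q2: "ennreal k * ennreal (x1 * m) = ennreal (k * x1 * m)" using k(1) x1 m0 by (simp add: ennreal_mult' mult.assoc)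
  have q3: "ennreal (\<phi> x1) * ennreal m = ennreal (\<phi> x1 * m)" using p1 m0 by (simp add: ennreal_mult')
  have "ennreal (k * x1 * m) + wnorm (\<lambda>x. \<phi> (V x)) \<rho> \<le> ennreal (k * x1 * m) + ennreal (\<phi> x1 * m)"
    using F unfolding q1 q2 q3 by (simp add: add.commute)
  hence "wnorm (\<lambda>x. \<phi> (V x)) \<rho> \<le> ennreal (\<phi> x1 * m)"
    unfolding ennreal_add_left_cancel_le by simp
  thus ?thesis unfolding \<rho>_def x1_def m_def .
qed

end

context setting begin

lemma Vset_lt: "{x. V x < c} \<in> sets borel"
proof -
  have "{x \<in> space borel. V x < c} \<in> sets borel" using Vm by measurable
  thus ?thesis by simp
qed

lemma Vset_ge: "{x. c \<le> V x} \<in> sets borel"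
proof -
  have "{x \<in> space borel. c \<le> V x} \<in> sets borel" using Vm by measurable
  thus ?thesis by simp
qed

lemma Vset_int: "{x. c \<le> V x \<and> V x < d} \<in> sets borel"
proof -
  have "{x. c \<le> V x \<and> V x < d} = {x. c \<le> V x} \<inter> {x. V x < d}" by blast
  thus ?thesis using Vset_lt Vset_ge by simp
qed

lemma res_mass: "B \<in> sets borel \<Longrightarrow> res \<nu> B UNIV = \<nu> B"
  unfolding res_def by simp

lemma res_fin:
  assumes "pos \<nu>" "B \<in> sets borel" "wnorm V \<nu> < \<infinity>"
  shows "wnorm V (res \<nu> B) < \<infinity>"
proof -
  have "wnorm V (res \<nu> B) \<le> wnorm V \<nu>"
    unfolding wnorm_res[OF assms(1,2) Vm] wnorm_pos[OF assms(1)]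
    by (rule nn_integral_mono) (simp add: indicator_def)
  thus ?thesis using assms(3) by simp
qed

lemma piece2:
  assumes s: "s \<ge> 0" and p: "pos \<nu>" and c: "c \<ge> 1" and e: "\<epsilon> > 0"
    and P: "P = {x. c \<le> V x \<and> V x < c + \<epsilon>}"
  shows "wnorm (\<lambda>x. \<phi> (V x)) (S s (res \<nu> P))
     \<le> wnorm (\<lambda>x. \<phi> (V x)) (res \<nu> P) + ennreal ((b * s + \<epsilon>) * \<nu> P)"
proof -
  have Pb: "P \<in> sets borel" unfolding P using Vset_int .
  have pr: "pos (res \<nu> P)" using res_pos(1)[OF p Pb] .
  have mP: "res \<nu> P UNIV = \<nu> P" using res_mass[OF Pb] .
  have nP: "\<nu> P \<ge> 0" using p unfolding pos_def by simp
  have bs: "b * s \<ge> 0" using bpos s by simp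
  define N where "N = jpos \<nu>"
  have eP: "emeasure N P = ennreal (\<nu> P)" unfolding N_def using jpos_emeasure[OF p Pb] .
  have PN: "P \<in> sets N" unfolding N_def using Pb by simp
  have bnd: "wnorm V (res \<nu> P) \<le> ennreal ((c + \<epsilon>) * res \<nu> P UNIV)"
  proof -
    have "wnorm V (res \<nu> P) = (\<integral>\<^sup>+ x. indicator P x * ennreal (V x) \<partial>N)"
      unfolding N_def by (rule wnorm_res[OF p Pb Vm])
    also have "\<dots> \<le> (\<integral>\<^sup>+ x. ennreal (c + \<epsilon>) * indicator P x \<partial>N)"
      by (rule nn_integral_mono) (auto simp: indicator_def P ennreal_leI)
    also have "\<dots> = ennreal (c + \<epsilon>) * ennreal (\<nu> P)"
      using PN eP by (simp add: nn_integral_cmult_indicator)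
    also have "\<dots> = ennreal ((c + \<epsilon>) * res \<nu> P UNIV)"
      unfolding mP by (rule ennreal_mult'[symmetric]) (use c e in simp)
    finally show ?thesis .
  qed
  have a1: "1 < c + \<epsilon>" using c e by simp
  have pc: "\<phi> c \<ge> 1" using adm c unfolding admissible_rate_def by simp
  have "wnorm (\<lambda>x. \<phi> (V x)) (S s (res \<nu> P)) \<le> ennreal (\<phi> (c + \<epsilon> + b * s) * \<nu> P)"
    using piece[OF s pr a1 bnd] unfolding mP .
  also have "\<dots> \<le> ennreal ((\<phi> c + (\<epsilon> + b * s)) * \<nu> P)"
  proof (rule ennreal_leI, rule mult_right_mono[OF _ nP])
    show "\<phi> (c + \<epsilon> + b * s) \<le> \<phi> c + (\<epsilon> + b * s)"
      using phi_lip[OF adm phile c, of "c + \<epsilon> + b * s"] e bs by simp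
  qed
  also have "\<dots> = ennreal (\<phi> c * \<nu> P) + ennreal ((b * s + \<epsilon>) * \<nu> P)"
  proof -
    have "\<phi> c \<ge> 1" using adm c unfolding admissible_rate_def by simp
    hence "ennreal ((\<phi> c + (\<epsilon> + b * s)) * \<nu> P) = ennreal (\<phi> c * \<nu> P + (b * s + \<epsilon>) * \<nu> P)"
      by (simp add: algebra_simps)
    also have "\<dots> = ennreal (\<phi> c * \<nu> P) + ennreal ((b * s + \<epsilon>) * \<nu> P)"
      by (rule ennreal_plus) (use \<open>\<phi> c \<ge> 1\<close> nP e bs in auto)
    finally show ?thesis .
  qed
  also have "\<dots> \<le> wnorm (\<lambda>x. \<phi> (V x)) (res \<nu> P) + ennreal ((b * s + \<epsilon>) * \<nu> P)"
  proof (rule add_right_mono)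
    have "ennreal (\<phi> c * \<nu> P) = (\<integral>\<^sup>+ x. ennreal (\<phi> c) * indicator P x \<partial>N)"
      using PN eP nP pc by (simp add: nn_integral_cmult_indicator ennreal_mult)
    also have "\<dots> \<le> (\<integral>\<^sup>+ x. indicator P x * ennreal (\<phi> (V x)) \<partial>N)"
      by (rule nn_integral_mono) (auto simp: indicator_def P intro!: ennreal_leI phi_mono[OF adm c])
    also have "\<dots> = wnorm (\<lambda>x. \<phi> (V x)) (res \<nu> P)"
      unfolding N_def by (rule wnorm_res[OF p Pb Phim, symmetric])
    finally show "ennreal (\<phi> c * \<nu> P) \<le> wnorm (\<lambda>x. \<phi> (V x)) (res \<nu> P)" .
  qed
  finally show ?thesis .
qed

end

context setting begin

abbreviation "Phi \<equiv> (\<lambda>x. \<phi> (V x))"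

lemma ind:
  assumes s: "s \<ge> 0" and p: "pos \<nu>" and e: "\<epsilon> > 0"
  shows "wnorm Phi (S s (res \<nu> {x. V x < 1 + real n * \<epsilon>}))
    \<le> wnorm Phi (res \<nu> {x. V x < 1 + real n * \<epsilon>}) + ennreal ((b * s + \<epsilon>) * \<nu> {x. V x < 1 + real n * \<epsilon>})"
proof (induction n)
  case 0
  have "{x. V x < 1 + real 0 * \<epsilon>} = {}" using V1 by (auto simp: not_less)
  moreover have "res \<nu> {} = (\<lambda>A. 0)"
    using fsm_empty[of \<nu>] p unfolding res_def pos_def by auto
  ultimately show ?case using S_zero[OF SS s] wnorm_zero by simp
next
  case (Suc n)
  define L where "L = {x. V x < 1 + real n * \<epsilon>}"
  define P where "P = {x. 1 + real n * \<epsilon> \<le> V x \<and> V x < 1 + real n * \<epsilon> + \<epsilon>}"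
  define L' where "L' = {x. V x < 1 + real (Suc n) * \<epsilon>}"
  have Lb: "L \<in> sets borel" unfolding L_def by (rule Vset_lt)
  have Pb: "P \<in> sets borel" unfolding P_def by (rule Vset_int)
  have LP: "L' = L \<union> P" "L \<inter> P = {}" unfolding L_def P_def L'_def using e by (auto simp: algebra_simps)
  have fn: "fsm \<nu>" using p unfolding pos_def by blast
  have rL: "pos (res \<nu> L)" and rP: "pos (res \<nu> P)" using res_pos(1)[OF p] Lb Pb by auto
  have rL': "pos (res \<nu> L')" using res_pos(1)[OF p] Lb Pb LP by auto
  have eq: "res \<nu> L' = (\<lambda>A. res \<nu> L A + res \<nu> P A)"
    using res_split[OF fn Lb Pb LP(2)] LP(1) by auto
  have Seq: "S s (res \<nu> L') = (\<lambda>A. S s (res \<nu> L) A + S s (res \<nu> P) A)"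
    unfolding eq by (rule S_lin[OF SS s]) (use rL rP in \<open>auto simp: pos_def\<close>)
  have w1: "wnorm Phi (S s (res \<nu> L')) = wnorm Phi (S s (res \<nu> L)) + wnorm Phi (S s (res \<nu> P))"
    by (rule wnorm_add[OF S_pos(1)[OF SS s rL] S_pos(1)[OF SS s rP] S_pos(1)[OF SS s rL'] _ Phim])
       (simp add: Seq)
  have w2: "wnorm Phi (res \<nu> L') = wnorm Phi (res \<nu> L) + wnorm Phi (res \<nu> P)"
    by (rule wnorm_add[OF rL rP rL' _ Phim]) (simp add: eq)
  have m: "\<nu> L' = \<nu> L + \<nu> P" using fsm_add[OF fn Lb Pb LP(2)] LP(1) by simp
  have nn: "\<nu> L \<ge> 0" "\<nu> P \<ge> 0" using p unfolding pos_def by auto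
  have bs: "b * s + \<epsilon> \<ge> 0" using bpos s e by simp
  have IH: "wnorm Phi (S s (res \<nu> L)) \<le> wnorm Phi (res \<nu> L) + ennreal ((b * s + \<epsilon>) * \<nu> L)"
    using Suc.IH unfolding L_def .
  have pc: "wnorm Phi (S s (res \<nu> P)) \<le> wnorm Phi (res \<nu> P) + ennreal ((b * s + \<epsilon>) * \<nu> P)"
    by (rule piece2[OF s p _ e P_def]) (use e in simp)
  have "wnorm Phi (S s (res \<nu> L')) \<le> (wnorm Phi (res \<nu> L) + ennreal ((b * s + \<epsilon>) * \<nu> L))
      + (wnorm Phi (res \<nu> P) + ennreal ((b * s + \<epsilon>) * \<nu> P))"
    unfolding w1 by (rule add_mono[OF IH pc])
  also have "\<dots> = wnorm Phi (res \<nu> L') + (ennreal ((b * s + \<epsilon>) * \<nu> L) + ennreal ((b * s + \<epsilon>) * \<nu> P))"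
    unfolding w2 by (simp add: algebra_simps)
  also have "ennreal ((b * s + \<epsilon>) * \<nu> L) + ennreal ((b * s + \<epsilon>) * \<nu> P) = ennreal ((b * s + \<epsilon>) * \<nu> L')"
    unfolding m distrib_left by (rule ennreal_plus[symmetric]) (use nn bs in auto)
  finally show ?case unfolding L'_def .
qed

end

context setting begin

lemma split_LT:
  assumes p: "pos \<nu>"
  shows "\<nu> = (\<lambda>A. res \<nu> {x. V x < K} A + res \<nu> {x. K \<le> V x} A)"
proof -
  have fn: "fsm \<nu>" using p unfolding pos_def by blast
  have u: "{x. V x < K} \<union> {x. K \<le> V x} = UNIV" "{x. V x < K} \<inter> {x. K \<le> V x} = {}" by auto
  show ?thesis
    using res_split[OF fn Vset_lt Vset_ge u(2)] u(1) res_UNIV[OF fn] by (metis (no_types))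
qed

lemma wnorm_split:
  assumes p: "pos \<nu>" and W: "W \<in> borel_measurable borel"
  shows "wnorm W \<nu> = wnorm W (res \<nu> {x. V x < K}) + wnorm W (res \<nu> {x. K \<le> V x})"
  by (rule wnorm_add[OF res_pos(1)[OF p Vset_lt] res_pos(1)[OF p Vset_ge] p _ W])
     (subst split_LT[OF p, of K], simp)

lemma tail:
  assumes p: "pos \<nu>" and f: "wnorm V \<nu> < \<infinity>" and e: "\<epsilon> > 0" and d: "\<delta> > 0"
  shows "\<exists>n. enn2real (wnorm V (res \<nu> {x. 1 + real n * \<epsilon> \<le> V x})) < \<delta>"
proof (rule ccontr)
  assume "\<not> ?thesis"
  hence ge: "\<And>n. enn2real (wnorm V (res \<nu> {x. 1 + real n * \<epsilon> \<le> V x})) \<ge> \<delta>" by (simp add: not_less)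
  define N where "N = jpos \<nu>"
  define L where "L = (\<lambda>n::nat. {x. V x < 1 + real n * \<epsilon>})"
  define F where "F = (\<lambda>n x. indicator (L n) x * ennreal (V x))"
  have Fm: "F n \<in> borel_measurable N" for n
  proof -
    have "L n \<in> sets N" unfolding N_def L_def using Vset_lt by simp
    thus ?thesis unfolding F_def N_def using meas_jpos[OF Vm] by measurable
  qed
  have Finc: "incseq F"
  proof (rule incseq_SucI, rule le_funI)
    fix n x
    have "L n \<subseteq> L (Suc n)" unfolding L_def using e by (auto simp: algebra_simps)
    thus "F n x \<le> F (Suc n) x" unfolding F_def by (auto simp: indicator_def)
  qed
  have Fsup: "(SUP n. F n x) = ennreal (V x)" for x
  proof (rule antisym)
    show "(SUP n. F n x) \<le> ennreal (V x)"
      by (rule SUP_least) (simp add: F_def indicator_def)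
    obtain n :: nat where "n > (V x - 1) / \<epsilon>" using reals_Archimedean2 by blast
    hence "x \<in> L n" unfolding L_def using e by (simp add: field_simps)
    hence "F n x = ennreal (V x)" unfolding F_def by simp
    thus "ennreal (V x) \<le> (SUP n. F n x)" by (metis SUP_upper UNIV_I)
  qed
  have "wnorm V \<nu> = (\<integral>\<^sup>+ x. (SUP n. F n x) \<partial>N)" unfolding Fsup N_def wnorm_pos[OF p] ..
  also have "\<dots> = (SUP n. integral\<^sup>N N (F n))" by (rule nn_integral_monotone_convergence_SUP[OF Finc Fm])
  also have "\<dots> = (SUP n. wnorm V (res \<nu> (L n)))"
    unfolding F_def N_def using wnorm_res[OF p Vset_lt Vm] unfolding L_def by simp
  finally have sup: "wnorm V \<nu> = (SUP n. wnorm V (res \<nu> (L n)))" .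
  define tot where "tot = enn2real (wnorm V \<nu>)"
  have tot: "wnorm V \<nu> = ennreal tot" "tot \<ge> 0" unfolding tot_def using f by simp_all
  have le: "wnorm V (res \<nu> (L n)) \<le> ennreal (tot - \<delta>)" for n
  proof -
    have sp: "wnorm V \<nu> = wnorm V (res \<nu> (L n)) + wnorm V (res \<nu> {x. 1 + real n * \<epsilon> \<le> V x})"
      unfolding L_def by (rule wnorm_split[OF p Vm])
    have fL: "wnorm V (res \<nu> (L n)) < \<infinity>" using sp f by (simp add: less_top)
    have fT: "wnorm V (res \<nu> {x. 1 + real n * \<epsilon> \<le> V x}) < \<infinity>" using sp f by (simp add: less_top)
    have "tot = enn2real (wnorm V (res \<nu> (L n))) + enn2real (wnorm V (res \<nu> {x. 1 + real n * \<epsilon> \<le> V x}))"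
      unfolding tot_def sp using fL fT by (simp add: enn2real_plus)
    hence "enn2real (wnorm V (res \<nu> (L n))) \<le> tot - \<delta>" using ge[of n] by simp
    hence "ennreal (enn2real (wnorm V (res \<nu> (L n)))) \<le> ennreal (tot - \<delta>)" by (rule ennreal_leI)
    thus ?thesis using fL by simp
  qed
  have "tot \<ge> \<delta>"
  proof -
    have sp: "wnorm V \<nu> = wnorm V (res \<nu> (L 0)) + wnorm V (res \<nu> {x. 1 + real 0 * \<epsilon> \<le> V x})"
      unfolding L_def by (rule wnorm_split[OF p Vm])
    have fT: "wnorm V (res \<nu> {x. 1 + real 0 * \<epsilon> \<le> V x}) < \<infinity>" using sp f by (simp add: less_top)
    have "wnorm V (res \<nu> {x. 1 + real 0 * \<epsilon> \<le> V x}) \<le> wnorm V \<nu>" unfolding sp by simp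
    hence "enn2real (wnorm V (res \<nu> {x. 1 + real 0 * \<epsilon> \<le> V x})) \<le> tot"
      unfolding tot_def using f by (simp add: enn2real_mono)
    thus ?thesis using ge[of 0] by simp
  qed
  hence "ennreal (tot - \<delta>) < ennreal tot" using d by (simp add: ennreal_less_iff)
  moreover have "ennreal tot \<le> ennreal (tot - \<delta>)" using sup le tot(1) by (metis SUP_least)
  ultimately show False by simp
qed

end

context setting begin

lemma key:
  assumes s: "s \<ge> 0" and p: "pos \<nu>" and f: "wnorm V \<nu> < \<infinity>"
  shows "enn2real (wnorm Phi (S s \<nu>)) \<le> enn2real (wnorm Phi \<nu>) + b * s * \<nu> UNIV"
proof -
  obtain C \<omega> where C: "C \<ge> 1" "\<omega> \<ge> 0"
    and Cb: "\<And>t \<mu>. t \<ge> 0 \<Longrightarrow> fsm \<mu> \<Longrightarrow> wnorm V \<mu> < \<infinity> \<Longrightarrow>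
           wnorm V (S t \<mu>) \<le> ennreal (C * exp (\<omega> * t)) * wnorm V \<mu>"
    using Son unfolding stochastic_semigroup_on_def by blast
  define Ce where "Ce = C * exp (\<omega> * s)"
  have Ce: "Ce > 0" unfolding Ce_def using C by simp
  define m where "m = \<nu> UNIV"
  have m0: "m \<ge> 0" using p unfolding m_def pos_def by simp
  have fn: "fsm \<nu>" using p unfolding pos_def by blast
  have fPhi: "wnorm Phi \<mu> < \<infinity>" if "wnorm V \<mu> < \<infinity>" for \<mu>
    using Phi_le_V[of \<mu>] that by (simp add: le_less_trans)
  have finS: "wnorm V (S s \<nu>) < \<infinity>" using wfin[OF p f s] .
  show ?thesis
  proof (rule field_le_epsilon)
    fix e :: real assume e: "e > 0"
    define \<epsilon> where "\<epsilon> = e / (2 * (m + 1))"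
    have eps: "\<epsilon> > 0" unfolding \<epsilon>_def using e m0 by simp
    have epsm: "\<epsilon> * m \<le> e / 2" unfolding \<epsilon>_def using e m0 by (simp add: field_simps)
    obtain n where n: "enn2real (wnorm V (res \<nu> {x. 1 + real n * \<epsilon> \<le> V x})) < e / (2 * Ce)"
      using tail[OF p f eps, of "e / (2 * Ce)"] e Ce by auto
    define L where "L = {x. V x < 1 + real n * \<epsilon>}"
    define T where "T = {x. 1 + real n * \<epsilon> \<le> V x}"
    have Lb: "L \<in> sets borel" unfolding L_def by (rule Vset_lt)
    have Tb: "T \<in> sets borel" unfolding T_def by (rule Vset_ge)
    have rL: "pos (res \<nu> L)" and rT: "pos (res \<nu> T)" using res_pos(1)[OF p] Lb Tb by auto
    have fL: "wnorm V (res \<nu> L) < \<infinity>" and fT: "wnorm V (res \<nu> T) < \<infinity>"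
      using res_fin[OF p _ f] Lb Tb by auto
    have spl: "\<nu> = (\<lambda>A. res \<nu> L A + res \<nu> T A)" unfolding L_def T_def by (rule split_LT[OF p])
    have Seq: "S s \<nu> = (\<lambda>A. S s (res \<nu> L) A + S s (res \<nu> T) A)"
      by (subst spl, rule S_lin[OF SS s]) (use rL rT in \<open>auto simp: pos_def\<close>)
    have w1: "wnorm Phi (S s \<nu>) = wnorm Phi (S s (res \<nu> L)) + wnorm Phi (S s (res \<nu> T))"
      by (rule wnorm_add[OF S_pos(1)[OF SS s rL] S_pos(1)[OF SS s rT] S_pos(1)[OF SS s p] _ Phim])
         (subst Seq, simp)
    have w2: "wnorm Phi \<nu> = wnorm Phi (res \<nu> L) + wnorm Phi (res \<nu> T)"
      unfolding L_def T_def by (rule wnorm_split[OF p Phim])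
    have i1: "wnorm Phi (S s (res \<nu> L)) \<le> wnorm Phi (res \<nu> L) + ennreal ((b * s + \<epsilon>) * \<nu> L)"
      unfolding L_def by (rule ind[OF s p eps])
    have i2: "wnorm Phi (S s (res \<nu> T)) \<le> ennreal Ce * wnorm V (res \<nu> T)"
      using Phi_le_V Cb[OF s _ fT] rT unfolding Ce_def pos_def by (blast intro: order_trans)
    define X where "X = enn2real (wnorm Phi (S s \<nu>))"
    define XL where "XL = enn2real (wnorm Phi (S s (res \<nu> L)))"
    define XT where "XT = enn2real (wnorm Phi (S s (res \<nu> T)))"
    define Y where "Y = enn2real (wnorm Phi \<nu>)"
    define YL where "YL = enn2real (wnorm Phi (res \<nu> L))"
    define YT where "YT = enn2real (wnorm Phi (res \<nu> T))"
    define ZT where "ZT = enn2real (wnorm V (res \<nu> T))"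
    have fSL: "wnorm Phi (S s (res \<nu> L)) < \<infinity>" and fST: "wnorm Phi (S s (res \<nu> T)) < \<infinity>"
      using fPhi wfin[OF rL fL s] wfin[OF rT fT s] by auto
    have fYL: "wnorm Phi (res \<nu> L) < \<infinity>" and fYT: "wnorm Phi (res \<nu> T) < \<infinity>"
      using fPhi fL fT by auto
    have eX: "X = XL + XT" unfolding X_def XL_def XT_def w1 using fSL fST by (simp add: enn2real_plus)
    have eY: "Y = YL + YT" unfolding Y_def YL_def YT_def w2 using fYL fYT by (simp add: enn2real_plus)
    have nL: "\<nu> L \<ge> 0" using p unfolding pos_def by simp
    have bse: "(b * s + \<epsilon>) * \<nu> L \<ge> 0" using nL bpos s eps by simp
    have r1: "XL \<le> YL + (b * s + \<epsilon>) * \<nu> L"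
    proof -
      have "wnorm Phi (res \<nu> L) + ennreal ((b * s + \<epsilon>) * \<nu> L) < \<infinity>" using fYL by (simp add: less_top)
      hence "XL \<le> enn2real (wnorm Phi (res \<nu> L) + ennreal ((b * s + \<epsilon>) * \<nu> L))"
        unfolding XL_def using enn2real_mono[OF i1] by (simp add: infinity_ennreal_def)
      thus ?thesis unfolding YL_def using fYL bse by (simp add: enn2real_plus)
    qed
    have r2: "XT \<le> Ce * ZT"
    proof -
      have "ennreal Ce * wnorm V (res \<nu> T) < \<infinity>" using fT by (simp add: ennreal_mult_less_top)
      hence "XT \<le> enn2real (ennreal Ce * wnorm V (res \<nu> T))"
        unfolding XT_def using enn2real_mono[OF i2] by (simp add: infinity_ennreal_def)
      thus ?thesis unfolding ZT_def using Ce by (simp add: enn2real_mult)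
    qed
    have YT0: "YT \<ge> 0" unfolding YT_def by simp
    have mL: "\<nu> L \<le> m" unfolding m_def using pos_mono[OF p Lb] by simp
    have ZT: "Ce * ZT \<le> e / 2" using n Ce unfolding ZT_def T_def by (simp add: field_simps)
    have "(b * s + \<epsilon>) * \<nu> L \<le> (b * s + \<epsilon>) * m"
      by (rule mult_left_mono[OF mL]) (use bpos s eps in simp)
    hence "X \<le> Y + b * s * m + \<epsilon> * m + e / 2"
      using eX eY r1 r2 YT0 ZT by (simp add: algebra_simps)
    thus "enn2real (wnorm Phi (S s \<nu>)) \<le> enn2real (wnorm Phi \<nu>) + b * s * \<nu> UNIV + e"
      using epsm unfolding X_def Y_def m_def by simp
  qed
qed

end

context setting begin

lemma main:
  assumes t: "t \<ge> 0" and fm: "fsm \<mu>" and nn: "\<forall>A. \<mu> A \<ge> 0" and f: "wnorm V \<mu> < \<infinity>"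
  shows "enn2real (wnorm V (S t \<mu>)) + \<sigma> * t * enn2real (wnorm (\<lambda>x. \<phi> (V x)) (S t \<mu>))
         \<le> enn2real (wnorm V \<mu>) + b * t * (1 + \<sigma> * t / 2) * enn2real (wnorm (\<lambda>_. 1) \<mu>)"
proof -
  have p: "pos \<mu>" using fm nn unfolding pos_def by blast
  define m where "m = \<mu> UNIV"
  have m0: "m \<ge> 0" using nn unfolding m_def by simp
  have mass0: "enn2real (wnorm (\<lambda>_. 1) \<mu>) = m" unfolding m_def mass_wnorm[OF p] using m0 m_def by simp
  have massu: "enn2real (wnorm (\<lambda>_. 1) (S u \<mu>)) = m" if "u \<ge> 0" for u
    using mass_wnorm[OF S_pos(1)[OF SS that p]] S_pos(2)[OF SS that p] m0 unfolding m_def by simp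
  define w where "w = (\<lambda>u. enn2real (wnorm Phi (S u \<mu>)))"
  have wmono: "w u' \<le> w u + b * (u' - u) * m" if "0 \<le> u" "u \<le> u'" for u u'
  proof -
    have "S u' \<mu> = S (u' - u) (S u \<mu>)"
      using SS that fm unfolding stochastic_semigroup_def by (metis diff_add_cancel diff_ge_0_iff_ge)
    moreover have "enn2real (wnorm Phi (S (u' - u) (S u \<mu>))) \<le> enn2real (wnorm Phi (S u \<mu>)) + b * (u' - u) * S u \<mu> UNIV"
      by (rule key) (use that S_pos[OF SS _ p] wfin[OF p f] in auto)
    ultimately show ?thesis unfolding w_def using S_pos(2)[OF SS _ p] that unfolding m_def by simp
  qed
  define c where "c = (\<lambda>u. min t (max 0 u))"
  define h where "h = (\<lambda>u. b * m * c u - w (c u))"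
  have c_in: "0 \<le> c u" "c u \<le> t" for u unfolding c_def using t by auto
  have c_id: "u \<in> {0..t} \<Longrightarrow> c u = u" for u unfolding c_def by auto
  have hmono: "mono h"
  proof (rule monoI)
    fix x y :: real assume "x \<le> y"
    hence cxy: "c x \<le> c y" unfolding c_def by auto
    have "w (c y) \<le> w (c x) + b * (c y - c x) * m" by (rule wmono[OF c_in(1) cxy])
    thus "h x \<le> h y" unfolding h_def by (simp add: algebra_simps)
  qed
  have hm: "h \<in> borel_measurable borel" by (rule borel_measurable_mono[OF hmono])
  have hb: "\<bar>h u\<bar> \<le> \<bar>h 0\<bar> + \<bar>h t\<bar>" for u
  proof -
    have "h u \<le> h t" "h 0 \<le> h u"
    proof -
      have cc: "c (c v) = c v" for v using c_id c_in[of v] by auto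
      have "h u = h (c u)" "h t = h (c t)" "h 0 = h (c 0)" unfolding h_def cc by auto
      moreover have "h (c u) \<le> h (c t)" "h (c 0) \<le> h (c u)"
        using hmono c_in[of u] unfolding c_def by (auto intro!: monoD[OF hmono])
      ultimately show "h u \<le> h t" "h 0 \<le> h u" by simp_all
    qed
    thus ?thesis by linarith
  qed
  define f where "f = (\<lambda>u. b * enn2real (wnorm (\<lambda>_. 1) (S u \<mu>))
                                - \<sigma> * enn2real (wnorm (\<lambda>x. \<phi> (V x)) (S u \<mu>)))"
  define F where "F = (\<lambda>u. b * m - \<sigma> * (b * m * u - h u))"
  have fF: "f u = F u" if "u \<in> {0..t}" for u
    using that massu[of u] c_id[OF that] unfolding f_def F_def h_def w_def by simp
  have eqi: "(\<lambda>u. indicator {0..t} u *\<^sub>R f u) = (\<lambda>u. indicator {0..t} u *\<^sub>R F u)"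
    by (rule ext) (simp add: indicator_def fF)
  have Fint: "set_integrable lborel {0..t} f"
    unfolding set_integrable_def eqi
  proof (rule integrableI_bounded_set[where A="{0..t}" and B="\<bar>b * m\<bar> + \<sigma> * (\<bar>b * m\<bar> * t + \<bar>h 0\<bar> + \<bar>h t\<bar>)"])
    show "{0..t} \<in> sets lborel" by simp
    show "(\<lambda>u. indicator {0..t} u *\<^sub>R F u) \<in> borel_measurable lborel"
      unfolding F_def using hm by measurable
    show "emeasure lborel {0..t} < \<infinity>" using t by simp
    show "AE x in lborel. x \<notin> {0..t} \<longrightarrow> indicator {0..t} x *\<^sub>R F x = 0" by simp
    show "AE x in lborel. x \<in> {0..t} \<longrightarrow> norm (indicator {0..t} x *\<^sub>R F x)
            \<le> \<bar>b * m\<bar> + \<sigma> * (\<bar>b * m\<bar> * t + \<bar>h 0\<bar> + \<bar>h t\<bar>)"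
    proof (rule AE_I2, rule impI)
      fix x :: real assume x: "x \<in> {0..t}"
      have "\<bar>b * m * x\<bar> \<le> \<bar>b * m\<bar> * t" using x by (simp add: abs_mult mult_left_mono)
      hence "\<bar>b * m * x - h x\<bar> \<le> \<bar>b * m\<bar> * t + \<bar>h 0\<bar> + \<bar>h t\<bar>" using hb[of x] by linarith
      hence "\<sigma> * \<bar>b * m * x - h x\<bar> \<le> \<sigma> * (\<bar>b * m\<bar> * t + \<bar>h 0\<bar> + \<bar>h t\<bar>)"
        using spos by (simp add: mult_left_mono)
      moreover have "\<bar>F x\<bar> \<le> \<bar>b * m\<bar> + \<sigma> * \<bar>b * m * x - h x\<bar>"
      proof -
        have "\<bar>\<sigma> * (b * m * x - h x)\<bar> = \<sigma> * \<bar>b * m * x - h x\<bar>" using spos by (simp add: abs_mult)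
        thus ?thesis unfolding F_def by (smt (verit))
      qed
      ultimately show "norm (indicator {0..t} x *\<^sub>R F x) \<le> \<bar>b * m\<bar> + \<sigma> * (\<bar>b * m\<bar> * t + \<bar>h 0\<bar> + \<bar>h t\<bar>)"
        using x by simp
    qed
  qed
  define H where "H = (\<lambda>u. (b * m - \<sigma> * w t + \<sigma> * b * m * t) - \<sigma> * b * m * u)"
  have Hint: "set_integrable lborel {0..t} H"
    unfolding set_integrable_def H_def by (rule borel_integrable_compact) (auto intro!: continuous_intros)
  have fH: "f u \<le> H u" if "u \<in> {0..t}" for u
  proof -
    have "w t \<le> w u + b * (t - u) * m" using wmono that by auto
    hence "\<sigma> * w t \<le> \<sigma> * (w u + b * (t - u) * m)" using spos by (simp add: mult_left_mono)
    thus ?thesis using massu[of u] that unfolding f_def H_def w_def by (simp add: algebra_simps)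
  qed
  have "(LINT u:{0..t}|lborel. f u) \<le> (LINT u:{0..t}|lborel. H u)"
    by (rule set_integral_mono[OF Fint Hint fH])
  also have "\<dots> = b * m * t - \<sigma> * t * w t + \<sigma> * b * m * t\<^sup>2 / 2"
  proof -
    have "(\<integral>x. H x * indicator {0..t} x \<partial>lborel)
        = (\<lambda>u. (b * m - \<sigma> * w t + \<sigma> * b * m * t) * u - \<sigma> * b * m * u\<^sup>2 / 2) t
          - (\<lambda>u. (b * m - \<sigma> * w t + \<sigma> * b * m * t) * u - \<sigma> * b * m * u\<^sup>2 / 2) 0"
      unfolding H_def by (rule integral_FTC_Icc_real) (use t in \<open>auto intro!: derivative_eq_intros continuous_intros\<close>)
    thus ?thesis unfolding set_lebesgue_integral_def by (simp add: mult.commute power2_eq_square algebra_simps)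
  qed
  finally have I: "(LINT u:{0..t}|lborel. f u) \<le> b * m * t - \<sigma> * t * w t + \<sigma> * b * m * t\<^sup>2 / 2" .
  have L: "enn2real (wnorm V (S t \<mu>)) \<le> enn2real (wnorm V \<mu>) + (LINT u:{0..t}|lborel. f u)"
    using lyap t fm nn f unfolding f_def by blast
  show ?thesis using L I unfolding mass0 w_def by (simp add: algebra_simps power2_eq_square)
qed

end



theorem corollary5p8:
  fixes V :: "'a::metric_space \<Rightarrow> real"
    and \<phi> :: "real \<Rightarrow> real"
    and S :: "real \<Rightarrow> ('a set \<Rightarrow> real) \<Rightarrow> ('a set \<Rightarrow> real)"
    and b \<sigma> :: real
  assumes "locally_compact_space (euclidean :: 'a topology)"
    and "separable_space (euclidean :: 'a topology)"
    and "continuous_on UNIV V" and "\<forall>x. V x \<ge> 1"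
    and "admissible_rate \<phi>" and "\<forall>v\<ge>1. \<phi> v \<le> v"
    and "feller_type S" and "stochastic_semigroup_on V S"
    and "b > 0" and "\<sigma> > 0"
    and lyap: "\<forall>t\<ge>0. \<forall>\<mu>. fsm \<mu> \<and> (\<forall>A. \<mu> A \<ge> 0) \<and> wnorm V \<mu> < \<infinity> \<longrightarrow>
       enn2real (wnorm V (S t \<mu>)) \<le> enn2real (wnorm V \<mu>) +
         (LINT u:{0..t}|lborel. b * enn2real (wnorm (\<lambda>_. 1) (S u \<mu>))
                                - \<sigma> * enn2real (wnorm (\<lambda>x. \<phi> (V x)) (S u \<mu>)))"
  shows "\<forall>t\<ge>0. \<forall>\<mu>. fsm \<mu> \<and> (\<forall>A. \<mu> A \<ge> 0) \<and> wnorm V \<mu> < \<infinity> \<longrightarrow>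
       enn2real (wnorm V (S t \<mu>)) + \<sigma> * t * enn2real (wnorm (\<lambda>x. \<phi> (V x)) (S t \<mu>))
         \<le> enn2real (wnorm V \<mu>) + b * t * (1 + \<sigma> * t / 2) * enn2real (wnorm (\<lambda>_. 1) \<mu>)"
proof -
  interpret setting V \<phi> S b \<sigma>
    by unfold_locales (use assms in auto)
  show ?thesis using main by blast
qed

end
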